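(* Let $R,T$ be finite disjoint sets with $R\ne\emptyset$ and $|R\sqcup T|\ge3$, and let $c$ be a metric cost function on $R\sqcup T$ which is injective on the edge set $E$ of the robot-task graph $G$ (i.e. $c(\{x,y\})\ne c(\{x',y'\})$ for distinct edges). Then $C(\textsc{Assign}(\mathcal{M}))\le 2\,C(\textsc{MinSum}(\mathcal{M}))$.
   Context: A metric cost function $c:(R\sqcup T)\times(R\sqcup T)\to\mathbb{R}_+$ satisfies $c(x,y)\ge0$, $c(x,y)=0$ iff $x=y$, $c(x,y)=c(y,x)$ and $c(x,z)\le c(x,y)+c(y,z)$. The robot-task graph $G$ has vertex set $R\sqcup T$, edge set $E$ consisting of all 2-element subsets of $R\sqcup T$, with edge cost $c(\{x,y\})=c(x,y)$. For a list $P=(v_0,\dots,v_n)$ of vertices, its cost is $C(P)=\sum_{i=0}^{n-1}c(v_i,v_{i+1})$ (and $0$ if $n=0$). A robot-route is such a list with $v_0\in R$ and $v_j\in T$ for $j\ge1$. A plan is a family of $|R|$ robot-routes whose vertex sets partition $R\sqcup T$; its cost is the sum of the costs of its routes. $\textsc{MinSum}(\mathcal{M})$ denotes a plan of minimum cost. $\textsc{Auction}(\mathcal{M})$: set $A=\emptyset$ and $a(r)=0$ for all $r\in R$. For $k=1,\dots,|T|$: let $w_k=\{s,t\}$ be the edge with $s\in R\cup A$, $t\in T\setminus A$ minimising $c(s,t)$ (unique by injectivity); set $a(t)=k$ and $A\leftarrow A\cup\{t\}$. Output the list $W=(w_1,\dots,w_{|T|})$ and the function $a:R\sqcup T\to\{0,\dots,|T|\}$.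 $\textsc{DFShortcut}$: the edges of $W$ form a forest each of whose components contains exactly one robot. For each robot $r$ let $V(r)$ be the vertex set of its component; start with $P(r)=(r)$ and, while $P(r)$ does not contain all of $V(r)$, scan the vertices of $P(r)$ from last to first, and at the first vertex $t$ having a neighbour (via an edge of $W$) not yet in $P(r)$, append the such neighbour $s$ with smallest $a(s)$. Output the plan $\{P(r):r\in R\}$. $\textsc{Assign}(\mathcal{M})$ is the plan obtained by applying $\textsc{DFShortcut}$ to the output $(W,a)$ of $\textsc{Auction}(\mathcal{M})$. *)

theory Defs
  imports Complex_Main
begin

fun pcost :: "('v \<Rightarrow> 'v \<Rightarrow> real) \<Rightarrow> 'v list \<Rightarrow> real" where
  "pcost c (x # y # xs) = c x y + pcost c (y # xs)"
| "pcost c _ = 0"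

definition metric_cost :: "'v set \<Rightarrow> ('v \<Rightarrow> 'v \<Rightarrow> real) \<Rightarrow> bool" where
  "metric_cost V c \<longleftrightarrow>
     (\<forall>x\<in>V. \<forall>y\<in>V. c x y \<ge> 0 \<and> (c x y = 0 \<longleftrightarrow> x = y) \<and> c x y = c y x) \<and>
     (\<forall>x\<in>V. \<forall>y\<in>V. \<forall>z\<in>V. c x z \<le> c x y + c y z)"

definition edge_injective :: "'v set \<Rightarrow> ('v \<Rightarrow> 'v \<Rightarrow> real) \<Rightarrow> bool" where
  "edge_injective V c \<longleftrightarrow>
     (\<forall>x\<in>V. \<forall>y\<in>V. \<forall>x'\<in>V. \<forall>y'\<in>V. x \<noteq> y \<longrightarrow> x' \<noteq> y' \<longrightarrow> {x, y} \<noteq> {x', y'}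
        \<longrightarrow> c x y \<noteq> c x' y')"

definition robot_route :: "'v set \<Rightarrow> 'v set \<Rightarrow> 'v list \<Rightarrow> bool" where
  "robot_route R T p \<longleftrightarrow> p \<noteq> [] \<and> hd p \<in> R \<and> set (tl p) \<subseteq> T"

definition is_plan :: "'v set \<Rightarrow> 'v set \<Rightarrow> ('v \<Rightarrow> 'v list) \<Rightarrow> bool" where
  "is_plan R T P \<longleftrightarrow>
     (\<forall>r\<in>R. robot_route R T (P r) \<and> hd (P r) = r) \<and>
     (\<Union>r\<in>R. set (P r)) = R \<union> T \<and>
     (\<forall>r\<in>R. \<forall>r'\<in>R. r \<noteq> r' \<longrightarrow> set (P r) \<inter> set (P r') = {})"

definition plan_cost :: "('v \<Rightarrow> 'v \<Rightarrow> real) \<Rightarrow> 'v set \<Rightarrow> ('v \<Rightarrow> 'v list) \<Rightarrow> real" where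
  "plan_cost c R P = (\<Sum>r\<in>R. pcost c (P r))"

definition minsum_cost :: "('v \<Rightarrow> 'v \<Rightarrow> real) \<Rightarrow> 'v set \<Rightarrow> 'v set \<Rightarrow> real" where
  "minsum_cost c R T = Inf (plan_cost c R ` {P. is_plan R T P})"

(* Auction: state (A, W, a); W is the list of chosen edges (s,t), a the label function *)
definition auction_step ::
  "('v \<Rightarrow> 'v \<Rightarrow> real) \<Rightarrow> 'v set \<Rightarrow> 'v set \<Rightarrow>
   'v set \<times> ('v \<times> 'v) list \<times> ('v \<Rightarrow> nat) \<Rightarrow> 'v set \<times> ('v \<times> 'v) list \<times> ('v \<Rightarrow> nat)" where
  "auction_step c R T st = (case st of (A, W, a) \<Rightarrow>
     (let p = (SOME p. p \<in> (R \<union> A) \<times> (T - A) \<and>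
                  (\<forall>q \<in> (R \<union> A) \<times> (T - A). c (fst p) (snd p) \<le> c (fst q) (snd q)))
      in (insert (snd p) A, W @ [p], a(snd p := Suc (length W)))))"

definition auction ::
  "('v \<Rightarrow> 'v \<Rightarrow> real) \<Rightarrow> 'v set \<Rightarrow> 'v set \<Rightarrow> ('v \<times> 'v) list \<times> ('v \<Rightarrow> nat)" where
  "auction c R T = snd ((auction_step c R T ^^ card T) ({}, [], (\<lambda>_. 0)))"

definition wadj :: "('v \<times> 'v) list \<Rightarrow> 'v \<Rightarrow> 'v \<Rightarrow> bool" where
  "wadj W x y \<longleftrightarrow> (x, y) \<in> set W \<or> (y, x) \<in> set W"

definition wcomp :: "('v \<times> 'v) list \<Rightarrow> 'v \<Rightarrow> 'v set" where
  "wcomp W r = {v. (r, v) \<in> {(x, y). wadj W x y}\<^sup>*}"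

definition dfs_step :: "('v \<times> 'v) list \<Rightarrow> ('v \<Rightarrow> nat) \<Rightarrow> 'v list \<Rightarrow> 'v list" where
  "dfs_step W a L =
     (let t = last (filter (\<lambda>v. \<exists>s. wadj W v s \<and> s \<notin> set L) L);
          s = (SOME s. wadj W t s \<and> s \<notin> set L \<and>
                  (\<forall>s'. wadj W t s' \<and> s' \<notin> set L \<longrightarrow> a s \<le> a s'))
      in L @ [s])"

(* iterate "while P(r) does not contain all of V(r)"; n iterations suffice for n >= |T| *)
definition dfs_route :: "('v \<times> 'v) list \<Rightarrow> ('v \<Rightarrow> nat) \<Rightarrow> nat \<Rightarrow> 'v \<Rightarrow> 'v list" where
  "dfs_route W a n r =
     ((\<lambda>L. if wcomp W r \<subseteq> set L then L else dfs_step W a L) ^^ n) [r]"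

definition assign :: "('v \<Rightarrow> 'v \<Rightarrow> real) \<Rightarrow> 'v set \<Rightarrow> 'v set \<Rightarrow> 'v \<Rightarrow> 'v list" where
  "assign c R T r = (case auction c R T of (W, a) \<Rightarrow> dfs_route W a (card T) r)"

end

theory Submission
  imports Defs
begin


definition und :: "('v \<times> 'v) set \<Rightarrow> ('v \<times> 'v) set" where
  "und F = {(x,y). (x,y) \<in> F \<or> (y,x) \<in> F}"

definition wcost :: "('v \<Rightarrow> 'v \<Rightarrow> real) \<Rightarrow> ('v \<times> 'v) list \<Rightarrow> real" where
  "wcost c W = sum_list (map (\<lambda>e. c (fst e) (snd e)) W)"

lemma und_sym: "sym (und F)" unfolding und_def sym_def by auto

lemma und_rt_sym: "(x,y) \<in> (und F)\<^sup>* \<Longrightarrow> (y,x) \<in> (und F)\<^sup>*"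
  using sym_rtrancl[OF und_sym, of F] by (auto simp: sym_def)

lemma cross_path:
  assumes "(x, y) \<in> rel\<^sup>*" "x \<notin> S" "y \<in> S"
  shows "\<exists>a b. (x, a) \<in> (rel \<inter> ((- S) \<times> (- S)))\<^sup>* \<and> (a, b) \<in> rel \<and> a \<notin> S \<and> b \<in> S"
  using assms
proof (induction rule: converse_rtrancl_induct)
  case base then show ?case by simp
next
  case (step x z)
  show ?case
  proof (cases "z \<in> S")
    case True then show ?thesis using step by blast
  next
    case False
    then obtain a b where ab: "(z, a) \<in> (rel \<inter> ((- S) \<times> (- S)))\<^sup>*" "(a, b) \<in> rel" "a \<notin> S" "b \<in> S"
      using step by blast
    have "(x, z) \<in> rel \<inter> ((- S) \<times> (- S))" using step False by auto
    then have "(x, a) \<in> (rel \<inter> ((- S) \<times> (- S)))\<^sup>*" using ab(1) by (rule converse_rtrancl_into_rtrancl)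
    then show ?thesis using ab by blast
  qed
qed

definition pick :: "('v \<Rightarrow> 'v \<Rightarrow> real) \<Rightarrow> 'v set \<Rightarrow> 'v set \<Rightarrow> 'v set \<Rightarrow> 'v \<times> 'v" where
  "pick c R T A = (SOME p. p \<in> (R \<union> A) \<times> (T - A) \<and>
                  (\<forall>q \<in> (R \<union> A) \<times> (T - A). c (fst p) (snd p) \<le> c (fst q) (snd q)))"

lemma step_eq: "auction_step c R T (A, W, a) =
  (insert (snd (pick c R T A)) A, W @ [pick c R T A], a(snd (pick c R T A) := Suc (length W)))"
  by (simp add: auction_step_def pick_def Let_def)

lemma pick_prop:
  assumes "finite R" "finite T" "R \<noteq> {}" "T - A \<noteq> {}" "finite A"
  shows "pick c R T A \<in> (R \<union> A) \<times> (T - A) \<and>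
     (\<forall>q \<in> (R \<union> A) \<times> (T - A). c (fst (pick c R T A)) (snd (pick c R T A)) \<le> c (fst q) (snd q))"
proof -
  let ?S = "(R \<union> A) \<times> (T - A)"
  let ?f = "\<lambda>p. c (fst p) (snd p)"
  have fin: "finite ?S" using assms by auto
  have ne: "?S \<noteq> {}" using assms by auto
  have "Min (?f ` ?S) \<in> ?f ` ?S" using fin ne by (intro Min_in) auto
  then obtain p where p: "p \<in> ?S" "?f p = Min (?f ` ?S)" by (metis (no_types, lifting) imageE)
  have "\<forall>q\<in>?S. ?f p \<le> ?f q" using p fin by auto
  then have "\<exists>p. p \<in> ?S \<and> (\<forall>q\<in>?S. ?f p \<le> ?f q)" using p by blast
  then show ?thesis unfolding pick_def by (rule someI_ex)
qed

lemma metric_nonneg: "metric_cost V c \<Longrightarrow> x \<in> V \<Longrightarrow> y \<in> V \<Longrightarrow> c x y \<ge> 0"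
  unfolding metric_cost_def by blast
lemma metric_sym: "metric_cost V c \<Longrightarrow> x \<in> V \<Longrightarrow> y \<in> V \<Longrightarrow> c x y = c y x"
  unfolding metric_cost_def by blast
lemma metric_zero: "metric_cost V c \<Longrightarrow> x \<in> V \<Longrightarrow> c x x = 0"
  unfolding metric_cost_def by blast
lemma metric_tri: "metric_cost V c \<Longrightarrow> x \<in> V \<Longrightarrow> y \<in> V \<Longrightarrow> z \<in> V \<Longrightarrow> c x z \<le> c x y + c y z"
  unfolding metric_cost_def by blast

lemma wcost_snoc: "wcost c (W @ [p]) = wcost c W + c (fst p) (snd p)"
  by (simp add: wcost_def)

lemma LB:
  assumes fR: "finite R" and fT: "finite T" and disj: "R \<inter> T = {}" and Rne: "R \<noteq> {}"
    and met: "metric_cost (R \<union> T) c"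
  shows "A \<subseteq> T \<Longrightarrow> card (T - A) = k \<Longrightarrow> finite F \<Longrightarrow> F \<subseteq> (R \<union> T) \<times> (R \<union> T) \<Longrightarrow>
    (\<forall>t\<in>T - A. \<exists>y\<in>R \<union> A. (t, y) \<in> (und F)\<^sup>*) \<Longrightarrow>
    wcost c (fst (snd ((auction_step c R T ^^ k) (A, W0, a0)))) \<le> wcost c W0 + (\<Sum>e\<in>F. c (fst e) (snd e))"
proof (induction k arbitrary: A W0 a0 F)
  case 0
  have "(\<Sum>e\<in>F. c (fst e) (snd e)) \<ge> 0"
    using 0 by (intro sum_nonneg) (auto intro!: metric_nonneg[OF met])
  then show ?case by simp
next
  case (Suc k)
  have finA: "finite A" using Suc.prems(1) fT finite_subset by blast
  have TA: "T - A \<noteq> {}" using Suc.prems(2) by (metis card.empty nat.distinct(1))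
  define p where "p = pick c R T A"
  define S where "S = R \<union> A"
  have pp: "p \<in> S \<times> (T - A)" "\<forall>q \<in> S \<times> (T - A). c (fst p) (snd p) \<le> c (fst q) (snd q)"
    using pick_prop[OF fR fT Rne TA finA, of c] unfolding p_def S_def by auto
  define t1 where "t1 = snd p"
  have t1: "t1 \<in> T - A" using pp unfolding t1_def by auto
  then obtain y where y: "y \<in> S" "(t1, y) \<in> (und F)\<^sup>*" using Suc.prems(5) unfolding S_def by blast
  have t1S: "t1 \<notin> S" using t1 disj unfolding S_def by auto
  obtain a b where ab: "(t1, a) \<in> (und F \<inter> ((- S) \<times> (- S)))\<^sup>*" "(a, b) \<in> und F" "a \<notin> S" "b \<in> S"
    using cross_path[OF y(2) t1S y(1)] by blast
  have aV: "a \<in> R \<union> T" and bV: "b \<in> R \<union> T" using ab(2) Suc.prems(4) unfolding und_def by auto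
  have aT: "a \<in> T - A" using aV ab(3) unfolding S_def by auto
  have "c (fst p) (snd p) \<le> c b a" using pp(2) aT ab(4) by auto
  also have "c b a = c a b" using metric_sym[OF met bV aV] .
  finally have pab: "c (fst p) (snd p) \<le> c a b" .
  obtain e where e: "e \<in> F" "e = (a, b) \<or> e = (b, a)" using ab(2) unfolding und_def by auto
  have ce: "c (fst e) (snd e) = c a b" using e(2) metric_sym[OF met bV aV] by auto
  define F' where "F' = F - {e}"
  have sumF: "(\<Sum>e\<in>F. c (fst e) (snd e)) = c a b + (\<Sum>e\<in>F'. c (fst e) (snd e))"
    unfolding F'_def using sum.remove[OF Suc.prems(3) e(1), of "\<lambda>e. c (fst e) (snd e)"] ce by simp
  have sub: "und F \<inter> ((- S) \<times> (- S)) \<subseteq> und F'"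
    using ab(4) e(2) unfolding und_def F'_def by auto
  have at1: "(a, t1) \<in> (und F')\<^sup>*"
    using und_rt_sym[OF rtrancl_mono[OF sub, THEN subsetD, OF ab(1)]] .
  have key: "\<exists>y'\<in> insert t1 S. (x, y') \<in> (und F')\<^sup>*" if "(x, z) \<in> (und F)\<^sup>*" "z \<in> S" for x z
    using that(1)
  proof (induction rule: converse_rtrancl_induct)
    case base then show ?case using that(2) by blast
  next
    case (step x z')
    then obtain y' where y': "y' \<in> insert t1 S" "(z', y') \<in> (und F')\<^sup>*" by blast
    show ?case
    proof (cases "(x, z') \<in> und F'")
      case True
      then show ?thesis using y' by (meson converse_rtrancl_into_rtrancl)
    next
      case False
      then have "x = a \<or> x = b" using step(1) e(2) unfolding und_def F'_def by auto
      then show ?thesis using at1 ab(4) by blast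
    qed
  qed
  have reach: "\<forall>t\<in>T - insert t1 A. \<exists>y\<in>R \<union> insert t1 A. (t, y) \<in> (und F')\<^sup>*"
  proof
    fix t assume "t \<in> T - insert t1 A"
    then obtain y where "y \<in> S" "(t, y) \<in> (und F)\<^sup>*" using Suc.prems(5) unfolding S_def by blast
    then show "\<exists>y\<in>R \<union> insert t1 A. (t, y) \<in> (und F')\<^sup>*" using key unfolding S_def by auto
  qed
  have IH: "wcost c (fst (snd ((auction_step c R T ^^ k) (insert t1 A, W0 @ [p], a0(t1 := Suc (length W0))))))
     \<le> wcost c (W0 @ [p]) + (\<Sum>e\<in>F'. c (fst e) (snd e))"
  proof (rule Suc.IH)
    show "insert t1 A \<subseteq> T" using t1 Suc.prems(1) by auto
    show "card (T - insert t1 A) = k" using Suc.prems(2) t1 fT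
      by (metis Diff_insert card_Diff_singleton diff_Suc_1 finite_Diff)
    show "finite F'" using Suc.prems(3) unfolding F'_def by auto
    show "F' \<subseteq> (R \<union> T) \<times> (R \<union> T)" using Suc.prems(4) unfolding F'_def by auto
    show "\<forall>t\<in>T - insert t1 A. \<exists>y\<in>R \<union> insert t1 A. (t, y) \<in> (und F')\<^sup>*" by (rule reach)
  qed
  have "(auction_step c R T ^^ Suc k) (A, W0, a0) =
      (auction_step c R T ^^ k) (insert t1 A, W0 @ [p], a0(t1 := Suc (length W0)))"
    by (simp only: funpow_Suc_right comp_apply step_eq p_def t1_def)
  then show ?case using IH pab sumF by (simp add: wcost_snoc)
qed



lemma filter_last:
  "filter P L \<noteq> [] \<Longrightarrow> \<exists>k<length L. L!k = last (filter P L) \<and> P (L!k) \<and>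
     (\<forall>i. k < i \<and> i < length L \<longrightarrow> \<not> P (L!i))"
proof (induction L rule: rev_induct)
  case Nil then show ?case by simp
next
  case (snoc x xs)
  show ?case
  proof (cases "P x")
    case True
    then show ?thesis by (rule_tac x="length xs" in exI) auto
  next
    case False
    then have "filter P xs \<noteq> []" using snoc.prems by simp
    then obtain k where k: "k<length xs" "xs!k = last (filter P xs)" "P (xs!k)"
      "\<forall>i. k < i \<and> i < length xs \<longrightarrow> \<not> P (xs!i)" using snoc.IH by blast
    show ?thesis
    proof (rule exI[of _ k], intro conjI allI impI)
      show "k < length (xs @ [x])" using k by simp
      show "(xs @ [x]) ! k = last (filter P (xs @ [x]))" using k False by (simp add: nth_append)
      show "P ((xs @ [x]) ! k)" using k by (simp add: nth_append)
      fix i assume "k < i \<and> i < length (xs @ [x])"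
      then show "\<not> P ((xs @ [x]) ! i)" using k False
        by (cases "i < length xs") (auto simp: nth_append)
    qed
  qed
qed

lemma pcost_snoc: "L \<noteq> [] \<Longrightarrow> pcost c (L @ [s]) = pcost c L + c (last L) s"
proof (induction L)
  case Nil then show ?case by simp
next
  case (Cons x xs)
  then show ?case by (cases xs) auto
qed

locale DF =
  fixes R T :: "'v set" and c :: "'v \<Rightarrow> 'v \<Rightarrow> real" and W :: "('v \<times> 'v) list" and a :: "'v \<Rightarrow> nat"
  assumes fR: "finite R" and fT: "finite T" and disj: "R \<inter> T = {}"
    and met: "metric_cost (R \<union> T) c"
    and Wsnd: "set (map snd W) = T" and Wdist: "distinct (map snd W)"
    and Wfst: "\<forall>e\<in>set W. fst e \<in> R \<union> T \<and> a (fst e) < a (snd e)"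
begin

definition par :: "'v \<Rightarrow> 'v" where "par v = fst (SOME e. e \<in> set W \<and> snd e = v)"

lemma injW: "inj_on snd (set W)" using Wdist by (simp add: distinct_map)

lemma inW_par: assumes e: "e \<in> set W" shows "par (snd e) = fst e"
proof -
  have "\<exists>e'. e' \<in> set W \<and> snd e' = snd e" using e by blast
  then have s: "(SOME e'. e' \<in> set W \<and> snd e' = snd e) \<in> set W \<and> snd (SOME e'. e' \<in> set W \<and> snd e' = snd e) = snd e"
    by (rule someI_ex)
  then have "(SOME e'. e' \<in> set W \<and> snd e' = snd e) = e" using injW e by (meson inj_onD)
  then show ?thesis unfolding par_def by simp
qed

lemma par_in: assumes "t \<in> T" shows "(par t, t) \<in> set W"
proof -
  obtain e where e: "e \<in> set W" "snd e = t" using assms Wsnd by auto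
  then show ?thesis using inW_par[OF e(1)] by (metis prod.collapse)
qed

lemma inW_iff: "(x, y) \<in> set W \<longleftrightarrow> y \<in> T \<and> x = par y"
  using inW_par[of "(x,y)"] par_in Wsnd by force

lemma par_V: "t \<in> T \<Longrightarrow> par t \<in> R \<union> T" using par_in Wfst by fastforce
lemma par_a: "t \<in> T \<Longrightarrow> a (par t) < a t" using par_in Wfst by fastforce

lemma wadj_iff: "wadj W x y \<longleftrightarrow> (y \<in> T \<and> x = par y) \<or> (x \<in> T \<and> y = par x)"
  unfolding wadj_def inW_iff by auto

definition Pr :: "('v \<times> 'v) set" where "Pr = {(v, par v) | v. v \<in> T}"

lemma Pr_iff: "(x, y) \<in> Pr \<longleftrightarrow> x \<in> T \<and> y = par x" unfolding Pr_def by auto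

lemma sv: "single_valued Pr" unfolding single_valued_def Pr_iff by auto

lemma Pr_rt_cases: "(v, w) \<in> Pr\<^sup>* \<Longrightarrow> v = w \<or> v \<in> T"
  by (erule converse_rtranclE) (auto simp: Pr_iff)

lemma Pr_rt_V: "(v, w) \<in> Pr\<^sup>* \<Longrightarrow> v \<in> R \<union> T \<Longrightarrow> w \<in> R \<union> T"
proof (induction rule: rtrancl_induct)
  case (step y z)
  then show ?case using par_V[of y] by (auto simp: Pr_iff)
qed simp

fun Dn :: "nat \<Rightarrow> 'v \<Rightarrow> real" where
  "Dn 0 v = 0"
| "Dn (Suc n) v = (if v \<in> T then Dn n (par v) + c (par v) v else 0)"

definition D :: "'v \<Rightarrow> real" where "D v = Dn (a v) v"

lemma Dn_stable: "a v \<le> n \<Longrightarrow> a v \<le> m \<Longrightarrow> Dn n v = Dn m v"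
proof (induction n arbitrary: m v)
  case 0
  then have "v \<notin> T" using par_a by fastforce
  then show ?case by (cases m) auto
next
  case (Suc n)
  show ?case
  proof (cases "v \<in> T")
    case False then show ?thesis by (cases m) auto
  next
    case True
    then have pa: "a (par v) < a v" by (rule par_a)
    then obtain m' where m: "m = Suc m'" using Suc.prems by (cases m) auto
    have "Dn n (par v) = Dn m' (par v)" using Suc.IH pa Suc.prems m by auto
    then show ?thesis using True m by simp
  qed
qed

lemma D_T: assumes "v \<in> T" shows "D v = D (par v) + c (par v) v"
proof -
  have pa: "a (par v) < a v" using assms by (rule par_a)
  then obtain m where m: "a v = Suc m" by (cases "a v") auto
  have "Dn m (par v) = Dn (a (par v)) (par v)" using Dn_stable pa m by auto
  then show ?thesis unfolding D_def using m assms by simp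
qed

lemma D_nT: "v \<notin> T \<Longrightarrow> D v = 0" unfolding D_def by (cases "a v") auto

lemma Dn_nonneg: "v \<in> R \<union> T \<Longrightarrow> Dn n v \<ge> 0"
proof (induction n arbitrary: v)
  case 0 then show ?case by simp
next
  case (Suc n)
  show ?case
  proof (cases "v \<in> T")
    case True
    then have "par v \<in> R \<union> T" by (rule par_V)
    then show ?thesis using True Suc.IH[of "par v"] metric_nonneg[OF met, of "par v" v] by auto
  qed simp
qed

lemma D_nonneg: "v \<in> R \<union> T \<Longrightarrow> D v \<ge> 0" unfolding D_def by (rule Dn_nonneg)

lemma anc_cost: "(u, t) \<in> Pr\<^sup>* \<Longrightarrow> u \<in> R \<union> T \<Longrightarrow> t \<in> R \<union> T \<Longrightarrow> c u t \<le> D u - D t"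
proof (induction rule: converse_rtrancl_induct)
  case base then show ?case using metric_zero[OF met] by simp
next
  case (step u y)
  then have uT: "u \<in> T" and y: "y = par u" by (auto simp: Pr_iff)
  have yV: "y \<in> R \<union> T" using par_V uT y by simp
  have "c u t \<le> c u y + c y t" using metric_tri[OF met step.prems(1) yV step.prems(2)] .
  also have "c u y = c y u" using metric_sym[OF met step.prems(1) yV] .
  also have "c y t \<le> D y - D t" using step.IH yV step.prems(2) by simp
  finally show ?case using D_T[OF uT] y by simp
qed

lemma root_unique: "(v, r) \<in> Pr\<^sup>* \<Longrightarrow> (v, r') \<in> Pr\<^sup>* \<Longrightarrow> r \<in> R \<Longrightarrow> r' \<in> R \<Longrightarrow> r = r'"
  using single_valued_confluent[OF sv] Pr_rt_cases disj by blast

lemma before: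
  assumes "(u, t) \<in> Pr\<^sup>+" and I2: "\<forall>i<length L. L!i \<in> T \<longrightarrow> (\<exists>j<i. L!j = par (L!i))"
  shows "i < length L \<Longrightarrow> L!i = u \<Longrightarrow> \<exists>j<i. L!j = t"
  using assms(1)
proof (induction arbitrary: i rule: converse_trancl_induct)
  case (base y)
  then show ?case using I2 by (auto simp: Pr_iff)
next
  case (step y z)
  then have "y \<in> T" "z = par y" by (auto simp: Pr_iff)
  then obtain j where j: "j < i" "L!j = z" using I2 step.prems by auto
  then obtain j' where "j' < j" "L!j' = t" using step.IH[of j] step.prems by auto
  then show ?case using j(1) by (intro exI[of _ j']) simp
qed

end



context DF
begin

definition E :: "'v list \<Rightarrow> real" where "E L = (\<Sum>v\<in>set L \<inter> T. c (par v) v)"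

definition Inv :: "'v \<Rightarrow> 'v list \<Rightarrow> bool" where
  "Inv r L \<longleftrightarrow> L \<noteq> [] \<and> distinct L \<and> r \<in> set L \<and> (\<forall>v\<in>set L. (v, r) \<in> Pr\<^sup>*) \<and>
     (\<forall>i<length L. L!i \<in> T \<longrightarrow> (\<exists>j<i. L!j = par (L!i))) \<and>
     (\<forall>u\<in>set L. (\<exists>y. wadj W u y \<and> y \<notin> set L) \<longrightarrow> (last L, u) \<in> Pr\<^sup>*) \<and>
     pcost c L + D (last L) \<le> 2 * E L"

lemma Inv_init: assumes "r \<in> R" shows "Inv r [r]"
proof -
  have "r \<notin> T" using assms disj by auto
  then have "{r} \<inter> T = {}" "D r = 0" using D_nT by auto
  then show ?thesis unfolding Inv_def E_def by simp
qed

lemma Inv_step: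
  assumes r: "r \<in> R" and inv: "Inv r L" and nc: "\<not> wcomp W r \<subseteq> set L"
  shows "Inv r (dfs_step W a L)"
proof -
  have ne: "L \<noteq> []" and dist: "distinct L" and rL: "r \<in> set L"
    and I1: "\<forall>v\<in>set L. (v, r) \<in> Pr\<^sup>*"
    and I2: "\<forall>i<length L. L!i \<in> T \<longrightarrow> (\<exists>j<i. L!j = par (L!i))"
    and I5: "\<forall>u\<in>set L. (\<exists>y. wadj W u y \<and> y \<notin> set L) \<longrightarrow> (last L, u) \<in> Pr\<^sup>*"
    and I6: "pcost c L + D (last L) \<le> 2 * E L"
    using inv unfolding Inv_def by auto
  have LV: "set L \<subseteq> R \<union> T"
  proof
    fix v assume "v \<in> set L"
    then have "(v, r) \<in> Pr\<^sup>*" using I1 by blast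
    then have "v = r \<or> v \<in> T" by (rule Pr_rt_cases)
    then show "v \<in> R \<union> T" using r by auto
  qed
  obtain v where v: "(r, v) \<in> {(x, y). wadj W x y}\<^sup>*" "v \<notin> set L" using nc unfolding wcomp_def by auto
  obtain a0 b0 where ab: "wadj W a0 b0" "a0 \<in> set L" "b0 \<notin> set L"
    using cross_path[OF v(1), of "- set L"] rL v(2) by auto
  define Q where "Q = (\<lambda>v. \<exists>s. wadj W v s \<and> s \<notin> set L)"
  have "filter Q L \<noteq> []" using ab unfolding Q_def filter_empty_conv by blast
  then obtain k where k: "k < length L" "L!k = last (filter Q L)" "Q (L!k)"
    "\<forall>i. k < i \<and> i < length L \<longrightarrow> \<not> Q (L!i)" using filter_last by blast
  define t where "t = L!k"
  have tL: "t \<in> set L" unfolding t_def using k(1) nth_mem by blast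
  define Ps where "Ps = (\<lambda>s. wadj W t s \<and> s \<notin> set L)"
  obtain s0 where "Ps s0" using k(3) unfolding t_def Ps_def Q_def by blast
  then have "\<exists>s. Ps s \<and> (\<forall>s'. Ps s' \<longrightarrow> a s \<le> a s')" by (rule ex_has_least_nat)
  then have ex2: "\<exists>s. wadj W t s \<and> s \<notin> set L \<and> (\<forall>s'. wadj W t s' \<and> s' \<notin> set L \<longrightarrow> a s \<le> a s')"
    unfolding Ps_def by blast
  define s where "s = (SOME s. wadj W t s \<and> s \<notin> set L \<and> (\<forall>s'. wadj W t s' \<and> s' \<notin> set L \<longrightarrow> a s \<le> a s'))"
  have sP: "wadj W t s \<and> s \<notin> set L \<and> (\<forall>s'. wadj W t s' \<and> s' \<notin> set L \<longrightarrow> a s \<le> a s')"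
    unfolding s_def by (rule someI_ex) (rule ex2)
  have step: "dfs_step W a L = L @ [s]"
    unfolding dfs_step_def s_def t_def k(2) Q_def Let_def by (rule refl)
  have Pss: "Ps s" using sP unfolding Ps_def by blast
  then have sL: "s \<notin> set L" and adj: "wadj W t s" unfolding Ps_def by auto
  have sT: "s \<in> T" and ps: "par s = t"
  proof -
    have "\<not> (t \<in> T \<and> s = par t)"
    proof
      assume "t \<in> T \<and> s = par t"
      then obtain j where "j < k" "L!j = s" using I2 k(1) unfolding t_def by auto
      then show False using sL k(1) by auto
    qed
    then show "s \<in> T" "par s = t" using adj wadj_iff by auto
  qed
  have sPt: "(s, t) \<in> Pr" using sT ps Pr_iff by auto
  have lt: "(last L, t) \<in> Pr\<^sup>*" using I5 tL k(3) unfolding t_def Q_def by auto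
  have tV: "t \<in> R \<union> T" using tL LV by auto
  have lV: "last L \<in> R \<union> T" using LV ne last_in_set by blast
  have sV: "s \<in> R \<union> T" using sT by auto
  show ?thesis unfolding step Inv_def
  proof (intro conjI)
    show "L @ [s] \<noteq> []" by simp
    show "distinct (L @ [s])" using dist sL by simp
    show "r \<in> set (L @ [s])" using rL by simp
    show "\<forall>v\<in>set (L @ [s]). (v, r) \<in> Pr\<^sup>*"
    proof
      fix v assume "v \<in> set (L @ [s])"
      then have "v \<in> set L \<or> v = s" by auto
      moreover have "(t, r) \<in> Pr\<^sup>*" using I1 tL by blast
      moreover have "(s, r) \<in> Pr\<^sup>*" using sPt \<open>(t, r) \<in> Pr\<^sup>*\<close> by (rule converse_rtrancl_into_rtrancl)
      ultimately show "(v, r) \<in> Pr\<^sup>*" using I1 by blast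
    qed
    show "\<forall>i<length (L @ [s]). (L @ [s]) ! i \<in> T \<longrightarrow> (\<exists>j<i. (L @ [s]) ! j = par ((L @ [s]) ! i))"
    proof (intro allI impI)
      fix i assume i: "i < length (L @ [s])" "(L @ [s]) ! i \<in> T"
      show "\<exists>j<i. (L @ [s]) ! j = par ((L @ [s]) ! i)"
      proof (cases "i < length L")
        case True
        then obtain j where "j < i" "L!j = par (L!i)" using I2 i by (auto simp: nth_append)
        then show ?thesis using True by (rule_tac x=j in exI) (auto simp: nth_append)
      next
        case False
        then have "i = length L" using i by simp
        then show ?thesis using k(1) ps unfolding t_def by (rule_tac x=k in exI) (auto simp: nth_append)
      qed
    qed
    show "\<forall>u\<in>set (L @ [s]). (\<exists>y. wadj W u y \<and> y \<notin> set (L @ [s])) \<longrightarrow> (last (L @ [s]), u) \<in> Pr\<^sup>*"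
    proof (intro ballI impI)
      fix u assume u: "u \<in> set (L @ [s])" "\<exists>y. wadj W u y \<and> y \<notin> set (L @ [s])"
      show "(last (L @ [s]), u) \<in> Pr\<^sup>*"
      proof (cases "u = s")
        case True then show ?thesis by simp
      next
        case False
        then have uL: "u \<in> set L" using u by simp
        have Qu: "Q u" using u(2) unfolding Q_def by auto
        then have lu: "(last L, u) \<in> Pr\<^sup>*" using I5 uL unfolding Q_def by auto
        have "(u, t) \<in> Pr\<^sup>* \<or> (t, u) \<in> Pr\<^sup>*" using single_valued_confluent[OF sv lu lt] .
        moreover have "(t, u) \<in> Pr\<^sup>*"
        proof (rule ccontr)
          assume nt: "(t, u) \<notin> Pr\<^sup>*"
          with calculation have ut: "(u, t) \<in> Pr\<^sup>*" by blast
          have "u \<noteq> t" using nt by auto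
          then have "(u, t) \<in> Pr\<^sup>+" using rtranclD[OF ut] by blast
          obtain i where i: "i < length L" "L!i = u" using uL by (meson in_set_conv_nth)
          obtain j where j: "j < i" "L!j = t" using before[OF \<open>(u, t) \<in> Pr\<^sup>+\<close> I2 i] by blast
          have "j = k" using j i k(1) dist unfolding t_def by (simp add: nth_eq_iff_index_eq)
          then show False using k(4) i j Qu by auto
        qed
        then show ?thesis using sPt by (simp add: converse_rtrancl_into_rtrancl)
      qed
    qed
    have pc: "pcost c (L @ [s]) = pcost c L + c (last L) s" using pcost_snoc[OF ne] .
    have Ds: "D s = D t + c t s" using D_T[OF sT] ps by simp
    have "set (L @ [s]) \<inter> T = insert s (set L \<inter> T)" using sT by auto
    then have EE: "E (L @ [s]) = E L + c t s" unfolding E_def using sL ps fT by simp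
    have tri: "c (last L) s \<le> c (last L) t + c t s" using metric_tri[OF met lV tV sV] .
    have ac: "c (last L) t \<le> D (last L) - D t" using anc_cost[OF lt lV tV] .
    show "pcost c (L @ [s]) + D (last (L @ [s])) \<le> 2 * E (L @ [s])"
      using pc Ds EE tri ac I6 by simp
  qed
qed

lemma Inv_route: assumes "r \<in> R" shows "Inv r (dfs_route W a n r)"
proof (induction n)
  case 0 then show ?case using Inv_init[OF assms] by (simp add: dfs_route_def)
next
  case (Suc n)
  then show ?case using Inv_step[OF assms] by (auto simp: dfs_route_def)
qed

lemma route_bound: assumes "r \<in> R" shows "pcost c (dfs_route W a n r) \<le> 2 * E (dfs_route W a n r)"
proof -
  let ?L = "dfs_route W a n r"
  have inv: "Inv r ?L" using Inv_route[OF assms] .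
  then have h: "pcost c ?L + D (last ?L) \<le> 2 * E ?L" unfolding Inv_def by blast
  have "?L \<noteq> []" using inv unfolding Inv_def by blast
  then have "last ?L \<in> set ?L" by (rule last_in_set)
  then have "(last ?L, r) \<in> Pr\<^sup>*" using inv unfolding Inv_def by blast
  then have "last ?L = r \<or> last ?L \<in> T" by (rule Pr_rt_cases)
  then have "last ?L \<in> R \<union> T" using assms by auto
  then have "D (last ?L) \<ge> 0" by (rule D_nonneg)
  then show ?thesis using h by linarith
qed

lemma wcost_eq: "wcost c W = (\<Sum>v\<in>T. c (par v) v)"
proof -
  have dW: "distinct W" using Wdist by (simp add: distinct_map)
  have "wcost c W = (\<Sum>e\<in>set W. c (fst e) (snd e))"
    unfolding wcost_def using sum_list_distinct_conv_sum_set[OF dW] by simp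
  also have "\<dots> = (\<Sum>e\<in>set W. c (par (snd e)) (snd e))" using inW_par by simp
  also have "\<dots> = (\<Sum>v\<in>snd ` set W. c (par v) v)"
    using sum.reindex[OF injW, of "\<lambda>v. c (par v) v"] by (simp add: comp_def)
  finally show ?thesis using Wsnd by simp
qed

lemma total: "(\<Sum>r\<in>R. pcost c (dfs_route W a n r)) \<le> 2 * wcost c W"
proof -
  let ?A = "\<lambda>r. set (dfs_route W a n r) \<inter> T"
  let ?f = "\<lambda>v. c (par v) v"
  have "(\<Sum>r\<in>R. pcost c (dfs_route W a n r)) \<le> (\<Sum>r\<in>R. 2 * E (dfs_route W a n r))"
    using route_bound by (intro sum_mono) auto
  also have "\<dots> = 2 * (\<Sum>r\<in>R. sum ?f (?A r))" unfolding E_def by (simp add: sum_distrib_left)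
  also have "(\<Sum>r\<in>R. sum ?f (?A r)) = sum ?f (\<Union>(?A ` R))"
  proof (rule sum.UNION_disjoint[symmetric])
    show "finite R" by (rule fR)
    show "\<forall>i\<in>R. finite (?A i)" by auto
    show "\<forall>i\<in>R. \<forall>j\<in>R. i \<noteq> j \<longrightarrow> ?A i \<inter> ?A j = {}"
    proof (intro ballI impI)
      fix i j assume ij: "i \<in> R" "j \<in> R" "i \<noteq> j"
      show "?A i \<inter> ?A j = {}"
      proof (rule ccontr)
        assume "?A i \<inter> ?A j \<noteq> {}"
        then obtain v where "v \<in> set (dfs_route W a n i)" "v \<in> set (dfs_route W a n j)" by auto
        then have "(v, i) \<in> Pr\<^sup>*" "(v, j) \<in> Pr\<^sup>*"
          using Inv_route[OF ij(1), of n] Inv_route[OF ij(2), of n] unfolding Inv_def by auto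
        then show False using root_unique ij by blast
      qed
    qed
  qed
  also have "sum ?f (\<Union>(?A ` R)) \<le> sum ?f T"
    using fT par_V by (intro sum_mono2) (auto intro!: metric_nonneg[OF met])
  finally show ?thesis using wcost_eq by simp
qed

end



definition AInv :: "'v set \<Rightarrow> 'v set \<Rightarrow> nat \<Rightarrow> 'v set \<times> ('v \<times> 'v) list \<times> ('v \<Rightarrow> nat) \<Rightarrow> bool" where
  "AInv R T k st \<longleftrightarrow> (case st of (A, W, a) \<Rightarrow>
     A \<subseteq> T \<and> card A = k \<and> set (map snd W) = A \<and> distinct (map snd W) \<and> length W = k \<and>
     (\<forall>e\<in>set W. fst e \<in> R \<union> A \<and> a (fst e) < a (snd e)) \<and> (\<forall>v. a v \<le> length W))"

lemma AInv_iter: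
  assumes fR: "finite R" and fT: "finite T" and disj: "R \<inter> T = {}" and Rne: "R \<noteq> {}"
  shows "k \<le> card T \<Longrightarrow> AInv R T k ((auction_step c R T ^^ k) ({}, [], (\<lambda>_. 0)))"
proof (induction k)
  case 0 then show ?case by (simp add: AInv_def)
next
  case (Suc k)
  obtain A W a where st: "(auction_step c R T ^^ k) ({}, [], (\<lambda>_. 0)) = (A, W, a)"
    by (metis prod.collapse)
  have I: "A \<subseteq> T" "card A = k" "set (map snd W) = A" "distinct (map snd W)" "length W = k"
    "\<forall>e\<in>set W. fst e \<in> R \<union> A \<and> a (fst e) < a (snd e)" "\<forall>v. a v \<le> length W"
    using Suc st by (auto simp: AInv_def)
  have finA: "finite A" using I(1) fT finite_subset by blast
  have TA: "T - A \<noteq> {}"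
  proof
    assume "T - A = {}"
    then have "T = A" using I(1) by auto
    then show False using Suc.prems I(2) by simp
  qed
  define p where "p = pick c R T A"
  have pp: "p \<in> (R \<union> A) \<times> (T - A)"
    using pick_prop[OF fR fT Rne TA finA, of c] unfolding p_def by auto
  define t where "t = snd p"
  have t: "t \<in> T" "t \<notin> A" "t \<notin> R" using pp disj unfolding t_def by auto
  have s: "fst p \<in> R \<union> A" using pp by auto
  have eq: "(auction_step c R T ^^ Suc k) ({}, [], (\<lambda>_. 0)) =
     (insert t A, W @ [p], a(t := Suc (length W)))"
    using st by (simp add: step_eq p_def t_def)
  show ?case unfolding eq AInv_def
  proof (simp only: prod.case, intro conjI)
    show "insert t A \<subseteq> T" using t I by auto
    show "card (insert t A) = Suc k" using t I finA by simp
    show "set (map snd (W @ [p])) = insert t A" using I t_def by auto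
    show "distinct (map snd (W @ [p]))" using I t t_def by auto
    show "length (W @ [p]) = Suc k" using I by simp
    show "\<forall>v. (a(t := Suc (length W))) v \<le> length (W @ [p])"
    proof
      fix v have "a v \<le> length W" using I(7) by blast
      then show "(a(t := Suc (length W))) v \<le> length (W @ [p])" by simp
    qed
    show "\<forall>e\<in>set (W @ [p]). fst e \<in> R \<union> insert t A \<and>
       (a(t := Suc (length W))) (fst e) < (a(t := Suc (length W))) (snd e)"
    proof
      fix e assume "e \<in> set (W @ [p])"
      then have "e \<in> set W \<or> e = p" by auto
      then show "fst e \<in> R \<union> insert t A \<and>
       (a(t := Suc (length W))) (fst e) < (a(t := Suc (length W))) (snd e)"
      proof
        assume e: "e \<in> set W"
        then have "snd e \<in> A" using I(3) by auto
        then have "snd e \<noteq> t" using t by auto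
        moreover have "fst e \<in> R \<union> A" "a (fst e) < a (snd e)" using I(6) e by auto
        moreover then have "fst e \<noteq> t" using t by auto
        ultimately show ?thesis by simp
      next
        assume e: "e = p"
        have "fst p \<noteq> t" using s t by auto
        then show ?thesis using e s I(7) t_def by (simp add: le_imp_less_Suc)
      qed
    qed
  qed
qed

lemma sum_set_le_sum_list:
  "(\<forall>x\<in>set xs. f x \<ge> (0::real)) \<Longrightarrow> sum f (set xs) \<le> sum_list (map f xs)"
proof (induction xs)
  case Nil then show ?case by simp
next
  case (Cons x xs)
  have "sum f (set (x # xs)) \<le> f x + sum f (set xs)"
  proof (cases "x \<in> set xs")
    case True
    then have "sum f (set (x # xs)) = sum f (set xs)" by (simp add: insert_absorb)
    then show ?thesis using Cons.prems by simp
  next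
    case False then show ?thesis by simp
  qed
  then show ?case using Cons by simp
qed

lemma sum_UN_le:
  assumes "finite I" "\<forall>i\<in>I. finite (A i)" "\<forall>x\<in>(\<Union>i\<in>I. A i). f x \<ge> (0::real)"
  shows "sum f (\<Union>i\<in>I. A i) \<le> (\<Sum>i\<in>I. sum f (A i))"
  using assms
proof (induction rule: finite_induct)
  case empty then show ?case by simp
next
  case (insert i I)
  have fin: "finite (A i)" "finite (\<Union>i\<in>I. A i)" using insert by auto
  have "sum f (A i \<union> (\<Union>i\<in>I. A i)) = sum f (A i) + sum f (\<Union>i\<in>I. A i) - sum f (A i \<inter> (\<Union>i\<in>I. A i))"
    using sum_Un[OF fin] .
  moreover have "sum f (A i \<inter> (\<Union>i\<in>I. A i)) \<ge> 0" using insert.prems by (intro sum_nonneg) auto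
  moreover have "sum f (\<Union>i\<in>I. A i) \<le> (\<Sum>i\<in>I. sum f (A i))" using insert by auto
  ultimately show ?case using insert.hyps by simp
qed

lemma pcost_zip: "pcost c xs = sum_list (map (\<lambda>e. c (fst e) (snd e)) (zip xs (tl xs)))"
  by (induction c xs rule: pcost.induct) auto

lemma path_hd: "v \<in> set xs \<Longrightarrow> (v, hd xs) \<in> (und (set (zip xs (tl xs))))\<^sup>*"
proof (induction xs arbitrary: v)
  case Nil then show ?case by simp
next
  case (Cons x xs)
  show ?case
  proof (cases "v = x")
    case True then show ?thesis by simp
  next
    case False
    then have v: "v \<in> set xs" and ne: "xs \<noteq> []" using Cons.prems by auto
    have sub: "und (set (zip xs (tl xs))) \<subseteq> und (set (zip (x # xs) (tl (x # xs))))"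
      using ne by (cases xs) (auto simp: und_def)
    have "(v, hd xs) \<in> (und (set (zip xs (tl xs))))\<^sup>*" using Cons.IH v .
    then have "(v, hd xs) \<in> (und (set (zip (x # xs) (tl (x # xs)))))\<^sup>*"
      using rtrancl_mono[OF sub] by blast
    moreover have "(hd xs, x) \<in> und (set (zip (x # xs) (tl (x # xs))))"
      using ne by (cases xs) (auto simp: und_def)
    ultimately show ?thesis by simp
  qed
qed

lemma zip_tl_sub: "e \<in> set (zip xs (tl xs)) \<Longrightarrow> fst e \<in> set xs \<and> snd e \<in> set xs"
proof -
  have "set (tl xs) \<subseteq> set xs" by (cases xs) auto
  moreover assume "e \<in> set (zip xs (tl xs))"
  ultimately show ?thesis by (cases e) (auto dest: set_zip_leftD set_zip_rightD)
qed



lemma plan_exists: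
  assumes "finite T" "R \<inter> T = {}" "R \<noteq> {}"
  shows "\<exists>P. is_plan R T P"
proof -
  obtain r0 where r0: "r0 \<in> R" using assms(3) by auto
  obtain xs where xs: "set xs = T" using finite_list[OF assms(1)] by auto
  define P where "P = (\<lambda>r. if r = r0 then r0 # xs else [r])"
  have "is_plan R T P"
    unfolding is_plan_def robot_route_def
  proof (intro conjI ballI impI)
    fix r assume "r \<in> R"
    then show "P r \<noteq> []" "hd (P r) \<in> R" "set (tl (P r)) \<subseteq> T" "hd (P r) = r"
      unfolding P_def using xs r0 by auto
  next
    show "(\<Union>r\<in>R. set (P r)) = R \<union> T"
    proof
      show "(\<Union>r\<in>R. set (P r)) \<subseteq> R \<union> T" unfolding P_def using xs r0 by (auto split: if_splits)
      show "R \<union> T \<subseteq> (\<Union>r\<in>R. set (P r))"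
      proof
        fix v assume "v \<in> R \<union> T"
        then show "v \<in> (\<Union>r\<in>R. set (P r))"
        proof
          assume "v \<in> R" then show ?thesis unfolding P_def by (intro UN_I[of v]) auto
        next
          assume "v \<in> T" then show ?thesis unfolding P_def using xs r0 by (intro UN_I[of r0]) auto
        qed
      qed
    qed
  next
    fix r r' assume "r \<in> R" "r' \<in> R" "r \<noteq> r'"
    then show "set (P r) \<inter> set (P r') = {}" unfolding P_def using xs assms(2) by auto
  qed
  then show ?thesis by blast
qed

theorem lemma5:
  fixes R T :: "'v set" and c :: "'v \<Rightarrow> 'v \<Rightarrow> real"
  assumes "finite R" and "finite T" and "R \<inter> T = {}" and "R \<noteq> {}"
    and "card (R \<union> T) \<ge> 3"
    and "metric_cost (R \<union> T) c"
    and "edge_injective (R \<union> T) c"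
  shows "plan_cost c R (assign c R T) \<le> 2 * minsum_cost c R T"
proof -
  note met = assms(6)
  define st where "st = (auction_step c R T ^^ card T) ({}, [], (\<lambda>_. 0))"
  obtain A W a where st_eq: "st = (A, W, a)" by (metis prod.collapse)
  have AI: "AInv R T (card T) st" unfolding st_def by (rule AInv_iter[OF assms(1-4)]) simp
  then have I: "A \<subseteq> T" "card A = card T" "set (map snd W) = A" "distinct (map snd W)"
    "\<forall>e\<in>set W. fst e \<in> R \<union> A \<and> a (fst e) < a (snd e)"
    using st_eq by (auto simp: AInv_def)
  have AT: "A = T" using card_subset_eq[OF assms(2) I(1) I(2)] .
  have auc: "auction c R T = (W, a)" unfolding auction_def st_def[symmetric] st_eq by simp
  interpret D: DF R T c W a
    using assms(1,2,3,6) I AT by unfold_locales auto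
  have asg: "assign c R T = (\<lambda>r. dfs_route W a (card T) r)"
    by (rule ext) (simp add: assign_def auc)
  have up: "plan_cost c R (assign c R T) \<le> 2 * wcost c W"
    unfolding plan_cost_def asg using D.total .
  have low: "wcost c W \<le> minsum_cost c R T"
    unfolding minsum_cost_def
  proof (rule cInf_greatest)
    show "plan_cost c R ` {P. is_plan R T P} \<noteq> {}" using plan_exists[OF assms(2-4)] by auto
    fix x assume "x \<in> plan_cost c R ` {P. is_plan R T P}"
    then obtain P where P: "is_plan R T P" "x = plan_cost c R P" by auto
    define F where "F = (\<Union>r\<in>R. set (zip (P r) (tl (P r))))"
    have PV: "\<forall>r\<in>R. set (P r) \<subseteq> R \<union> T" using P(1) unfolding is_plan_def by blast
    have FV: "F \<subseteq> (R \<union> T) \<times> (R \<union> T)"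
    proof
      fix e assume "e \<in> F"
      then obtain r where "r \<in> R" "e \<in> set (zip (P r) (tl (P r)))" unfolding F_def by auto
      then show "e \<in> (R \<union> T) \<times> (R \<union> T)" using PV zip_tl_sub[of e "P r"] by (cases e) auto
    qed
    have Fnn: "\<forall>e\<in>F. c (fst e) (snd e) \<ge> 0"
    proof
      fix e assume "e \<in> F"
      then have "fst e \<in> R \<union> T" "snd e \<in> R \<union> T" using FV by auto
      then show "c (fst e) (snd e) \<ge> 0" by (rule metric_nonneg[OF met])
    qed
    have finF: "finite F" unfolding F_def using assms(1) by auto
    have reach: "\<forall>t\<in>T - {}. \<exists>y\<in>R \<union> {}. (t, y) \<in> (und F)\<^sup>*"
    proof
      fix t assume "t \<in> T - {}"
      then obtain r where r: "r \<in> R" "t \<in> set (P r)" using P(1) unfolding is_plan_def by blast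
      have hd: "hd (P r) = r" using P(1) r unfolding is_plan_def by blast
      have "(t, r) \<in> (und (set (zip (P r) (tl (P r)))))\<^sup>*" using path_hd[OF r(2)] hd by simp
      moreover have sub: "und (set (zip (P r) (tl (P r)))) \<subseteq> und F" unfolding F_def und_def using r by auto
      ultimately have "(t, r) \<in> (und F)\<^sup>*" using rtrancl_mono[OF sub] by blast
      then show "\<exists>y\<in>R \<union> {}. (t, y) \<in> (und F)\<^sup>*" using r by auto
    qed
    have "wcost c (fst (snd st)) \<le> wcost c [] + (\<Sum>e\<in>F. c (fst e) (snd e))"
      unfolding st_def by (rule LB[OF assms(1-4) met]) (use finF FV reach in auto)
    then have "wcost c W \<le> (\<Sum>e\<in>F. c (fst e) (snd e))" using st_eq by (simp add: wcost_def)
    also have "\<dots> \<le> (\<Sum>r\<in>R. (\<Sum>e\<in>set (zip (P r) (tl (P r))). c (fst e) (snd e)))"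
      unfolding F_def
    proof (rule sum_UN_le)
      show "finite R" by (rule assms(1))
      show "\<forall>i\<in>R. finite (set (zip (P i) (tl (P i))))" by auto
      show "\<forall>x\<in>\<Union>r\<in>R. set (zip (P r) (tl (P r))). 0 \<le> c (fst x) (snd x)"
        using Fnn unfolding F_def by blast
    qed
    also have "\<dots> \<le> (\<Sum>r\<in>R. pcost c (P r))"
    proof (rule sum_mono)
      fix r assume r: "r \<in> R"
      have "\<forall>e\<in>set (zip (P r) (tl (P r))). c (fst e) (snd e) \<ge> 0"
        using Fnn r unfolding F_def by blast
      then show "(\<Sum>e\<in>set (zip (P r) (tl (P r))). c (fst e) (snd e)) \<le> pcost c (P r)"
        unfolding pcost_zip by (rule sum_set_le_sum_list)
    qed
    finally show "wcost c W \<le> x" using P(2) unfolding plan_cost_def by simp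
  qed
  show ?thesis using up low by linarith
qed


end
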